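(* Let $G_{\mathrm{vc}}=(V_{\mathrm{vc}},E_{\mathrm{vc}})$ be a vertex-capacitated graph with node-weighting $A_{\mathrm{vc}}$, and let $G_{\mathrm{ec}}=(V_{\mathrm{ec}},E_{\mathrm{ec}})$ be the corresponding directed edge-capacitated graph with node-weighting $A_{\mathrm{ec}}$. Then for all $h,s,\phi$: (1) If $A_{\mathrm{vc}}$ is $(h,s)$-length $\phi$-expanding in $G_{\mathrm{vc}}$, then $A_{\mathrm{ec}}$ is $(h,s)$-length $\phi$-expanding in $G_{\mathrm{ec}}$. (2) If $A_{\mathrm{ec}}$ is $(h,s)$-length $\phi$-expanding in $G_{\mathrm{ec}}$, then $A_{\mathrm{vc}}$ is $(h,s)$-length $\frac{\phi}{3}$-expanding in $G_{\mathrm{vc}}$.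
   Context: Vertex-capacitated graph: finite undirected graph with positive integer lengths $\ell$ and capacities $u$ on vertices and edges; path length sums vertex and edge lengths. Corresponding directed graph: for each $v\in V_{\mathrm{vc}}$, add vertices $v_{\mathrm{in}},v_{\mathrm{mid}},v_{\mathrm{out}}$ and directed edges $(v_{\mathrm{in}},v_{\mathrm{mid}}),(v_{\mathrm{mid}},v_{\mathrm{out}}),(v_{\mathrm{in}},v_{\mathrm{out}})$, each with length $\ell(v)$ and capacity $u(v)$; for each edge $e=\{u,v\}\in E_{\mathrm{vc}}$ add directed edges $(u_{\mathrm{out}},v_{\mathrm{in}})$ and $(v_{\mathrm{out}},u_{\mathrm{in}})$ with length $\ell(e)$ and capacity $u(e)$; set $A_{\mathrm{ec}}(v_{\mathrm{mid}})=A_{\mathrm{vc}}(v)$ and $A_{\mathrm{ec}}=0$ on all other vertices. General notions: node-weighting $A\ge0$; demand $D:V\times V\to\mathbb{R}_{\ge0}$; $A$-respecting: $\max\{\sum_wD(v,w),\sum_wD(w,v)\}\le A(v)$; $h$-length: $D(v,w)>0\Rightarrow\mathrm{dist}(v,w)\le h$; symmetric: $D(v,w)=D(w,v)$. An $H$-length moving cut assigns to each edge (and, in a vertex-capacitated graph, also each vertex) $x$ a value $C(x)\in\{0,\tfrac1H,\dots\}\cap[0,1]$; $|C|=\sum_xu(x)C(x)$; $G-C$ has lengths $\ell(x)+H\cdot C(x)$; $\mathrm{sep}_{h'}(C,D)=\sum_{(u,v):\mathrm{dist}_{G-C}(u,v)>h'}D(u,v)$; $\mathrm{spars}_{h'}(C,D)=|C|/\mathrm{sep}_{h'}(C,D)$.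 For an $hs$-length moving cut $C$, $\mathrm{spars}_{(h,s)}(C,A)=\min\mathrm{spars}_{hs}(C,D)$ over $A$-respecting $h$-length demands $D$ — required to be symmetric in the directed graph $G_{\mathrm{ec}}$, arbitrary in $G_{\mathrm{vc}}$ (zero separation counts as $+\infty$). $A$ is $(h,s)$-length $\phi$-expanding if $\mathrm{spars}_{(h,s)}(C,A)\ge\phi$ for every $hs$-length moving cut $C$. *)

theory Defs
  imports "HOL-Analysis.Analysis" "HOL-Library.Extended_Real"
begin

definition cut_val :: "real \<Rightarrow> real \<Rightarrow> bool" where
  "cut_val H x \<longleftrightarrow> (\<exists>k::nat. x = real k / H) \<and> 0 \<le> x \<and> x \<le> 1"

definition demand_on :: "'v set \<Rightarrow> ('v \<Rightarrow> 'v \<Rightarrow> real) \<Rightarrow> bool" where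
  "demand_on V D \<longleftrightarrow> (\<forall>u v. 0 \<le> D u v) \<and> (\<forall>u v. D u v \<noteq> 0 \<longrightarrow> u \<in> V \<and> v \<in> V)"

definition A_respecting :: "'v set \<Rightarrow> ('v \<Rightarrow> real) \<Rightarrow> ('v \<Rightarrow> 'v \<Rightarrow> real) \<Rightarrow> bool" where
  "A_respecting V A D \<longleftrightarrow> (\<forall>v\<in>V. max (\<Sum>w\<in>V. D v w) (\<Sum>w\<in>V. D w v) \<le> A v)"

definition symmetric_demand :: "('v \<Rightarrow> 'v \<Rightarrow> real) \<Rightarrow> bool" where
  "symmetric_demand D \<longleftrightarrow> (\<forall>u v. D u v = D v u)"

definition spars_of :: "real \<Rightarrow> real \<Rightarrow> ereal" where
  "spars_of sz sep = (if sep = 0 then \<infinity> else ereal (sz / sep))"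

definition dwalk :: "'v set \<Rightarrow> ('v \<times> 'v) set \<Rightarrow> 'v list \<Rightarrow> bool" where
  "dwalk V E p \<longleftrightarrow> p \<noteq> [] \<and> set p \<subseteq> V \<and> (\<forall>e\<in>set (zip p (tl p)). e \<in> E)"

definition dwalk_len :: "('v \<times> 'v \<Rightarrow> real) \<Rightarrow> 'v list \<Rightarrow> real" where
  "dwalk_len l p = sum_list (map l (zip p (tl p)))"

definition ddist :: "'v set \<Rightarrow> ('v \<times> 'v) set \<Rightarrow> ('v \<times> 'v \<Rightarrow> real) \<Rightarrow> 'v \<Rightarrow> 'v \<Rightarrow> ereal" where
  "ddist V E l u v = (INF p\<in>{p. dwalk V E p \<and> hd p = u \<and> last p = v}. ereal (dwalk_len l p))"

definition d_movcut :: "('v \<times> 'v) set \<Rightarrow> real \<Rightarrow> ('v \<times> 'v \<Rightarrow> real) \<Rightarrow> bool" where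
  "d_movcut E H C \<longleftrightarrow> (\<forall>e\<in>E. cut_val H (C e))"

definition d_cutsize :: "('v \<times> 'v) set \<Rightarrow> ('v \<times> 'v \<Rightarrow> real) \<Rightarrow> ('v \<times> 'v \<Rightarrow> real) \<Rightarrow> real" where
  "d_cutsize E cap C = (\<Sum>e\<in>E. cap e * C e)"

definition d_sep :: "'v set \<Rightarrow> ('v \<times> 'v) set \<Rightarrow> ('v \<times> 'v \<Rightarrow> real) \<Rightarrow> real \<Rightarrow>
    ('v \<times> 'v \<Rightarrow> real) \<Rightarrow> real \<Rightarrow> ('v \<Rightarrow> 'v \<Rightarrow> real) \<Rightarrow> real" where
  "d_sep V E l H C hp D =
     (\<Sum>(u,v)\<in>{(u,v)\<in>V \<times> V. ddist V E (\<lambda>e. l e + H * C e) u v > ereal hp}. D u v)"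

definition d_hlength :: "'v set \<Rightarrow> ('v \<times> 'v) set \<Rightarrow> ('v \<times> 'v \<Rightarrow> real) \<Rightarrow> real \<Rightarrow> ('v \<Rightarrow> 'v \<Rightarrow> real) \<Rightarrow> bool" where
  "d_hlength V E l h D \<longleftrightarrow> (\<forall>u v. D u v > 0 \<longrightarrow> ddist V E l u v \<le> ereal h)"

definition d_spars_hs :: "'v set \<Rightarrow> ('v \<times> 'v) set \<Rightarrow> ('v \<times> 'v \<Rightarrow> real) \<Rightarrow> ('v \<times> 'v \<Rightarrow> real) \<Rightarrow>
    ('v \<Rightarrow> real) \<Rightarrow> real \<Rightarrow> real \<Rightarrow> ('v \<times> 'v \<Rightarrow> real) \<Rightarrow> ereal" where
  "d_spars_hs V E l cap A h s C =
     (INF D\<in>{D. demand_on V D \<and> A_respecting V A D \<and> d_hlength V E l h D \<and> symmetric_demand D}.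
        spars_of (d_cutsize E cap C) (d_sep V E l (h * s) C (h * s) D))"

definition d_expanding :: "'v set \<Rightarrow> ('v \<times> 'v) set \<Rightarrow> ('v \<times> 'v \<Rightarrow> real) \<Rightarrow> ('v \<times> 'v \<Rightarrow> real) \<Rightarrow>
    ('v \<Rightarrow> real) \<Rightarrow> real \<Rightarrow> real \<Rightarrow> real \<Rightarrow> bool" where
  "d_expanding V E l cap A h s \<phi> \<longleftrightarrow>
     (\<forall>C. d_movcut E (h * s) C \<longrightarrow> d_spars_hs V E l cap A h s C \<ge> ereal \<phi>)"

definition vc_graph :: "'v set \<Rightarrow> 'v set set \<Rightarrow> ('v \<Rightarrow> nat) \<Rightarrow> ('v set \<Rightarrow> nat) \<Rightarrow>
    ('v \<Rightarrow> nat) \<Rightarrow> ('v set \<Rightarrow> nat) \<Rightarrow> ('v \<Rightarrow> real) \<Rightarrow> bool" where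
  "vc_graph V E lv le uv ue A \<longleftrightarrow> finite V \<and>
     (\<forall>e\<in>E. \<exists>a b. e = {a, b} \<and> a \<noteq> b \<and> a \<in> V \<and> b \<in> V) \<and>
     (\<forall>v\<in>V. 0 < lv v \<and> 0 < uv v) \<and> (\<forall>e\<in>E. 0 < le e \<and> 0 < ue e) \<and> (\<forall>v\<in>V. 0 \<le> A v)"

definition vwalk :: "'v set \<Rightarrow> 'v set set \<Rightarrow> 'v list \<Rightarrow> bool" where
  "vwalk V E p \<longleftrightarrow> p \<noteq> [] \<and> set p \<subseteq> V \<and> (\<forall>(a,b)\<in>set (zip p (tl p)). {a, b} \<in> E)"

definition vwalk_len :: "('v \<Rightarrow> real) \<Rightarrow> ('v set \<Rightarrow> real) \<Rightarrow> 'v list \<Rightarrow> real" where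
  "vwalk_len lv le p = sum_list (map lv p) + sum_list (map (\<lambda>(a,b). le {a, b}) (zip p (tl p)))"

definition vdist :: "'v set \<Rightarrow> 'v set set \<Rightarrow> ('v \<Rightarrow> real) \<Rightarrow> ('v set \<Rightarrow> real) \<Rightarrow> 'v \<Rightarrow> 'v \<Rightarrow> ereal" where
  "vdist V E lv le u v = (if u = v then 0 else
     (INF p\<in>{p. vwalk V E p \<and> hd p = u \<and> last p = v}. ereal (vwalk_len lv le p)))"

definition v_movcut :: "'v set \<Rightarrow> 'v set set \<Rightarrow> real \<Rightarrow> ('v \<Rightarrow> real) \<Rightarrow> ('v set \<Rightarrow> real) \<Rightarrow> bool" where
  "v_movcut V E H Cv Ce \<longleftrightarrow> (\<forall>v\<in>V. cut_val H (Cv v)) \<and> (\<forall>e\<in>E. cut_val H (Ce e))"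

definition v_cutsize :: "'v set \<Rightarrow> 'v set set \<Rightarrow> ('v \<Rightarrow> nat) \<Rightarrow> ('v set \<Rightarrow> nat) \<Rightarrow>
    ('v \<Rightarrow> real) \<Rightarrow> ('v set \<Rightarrow> real) \<Rightarrow> real" where
  "v_cutsize V E uv ue Cv Ce = (\<Sum>v\<in>V. real (uv v) * Cv v) + (\<Sum>e\<in>E. real (ue e) * Ce e)"

definition v_sep :: "'v set \<Rightarrow> 'v set set \<Rightarrow> ('v \<Rightarrow> nat) \<Rightarrow> ('v set \<Rightarrow> nat) \<Rightarrow> real \<Rightarrow>
    ('v \<Rightarrow> real) \<Rightarrow> ('v set \<Rightarrow> real) \<Rightarrow> real \<Rightarrow> ('v \<Rightarrow> 'v \<Rightarrow> real) \<Rightarrow> real" where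
  "v_sep V E lv le H Cv Ce hp D =
     (\<Sum>(u,v)\<in>{(u,v)\<in>V \<times> V.
         vdist V E (\<lambda>x. real (lv x) + H * Cv x) (\<lambda>e. real (le e) + H * Ce e) u v > ereal hp}. D u v)"

definition v_hlength :: "'v set \<Rightarrow> 'v set set \<Rightarrow> ('v \<Rightarrow> nat) \<Rightarrow> ('v set \<Rightarrow> nat) \<Rightarrow> real \<Rightarrow>
    ('v \<Rightarrow> 'v \<Rightarrow> real) \<Rightarrow> bool" where
  "v_hlength V E lv le h D \<longleftrightarrow>
     (\<forall>u v. D u v > 0 \<longrightarrow> vdist V E (\<lambda>x. real (lv x)) (\<lambda>e. real (le e)) u v \<le> ereal h)"

definition v_spars_hs :: "'v set \<Rightarrow> 'v set set \<Rightarrow> ('v \<Rightarrow> nat) \<Rightarrow> ('v set \<Rightarrow> nat) \<Rightarrow>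
    ('v \<Rightarrow> nat) \<Rightarrow> ('v set \<Rightarrow> nat) \<Rightarrow> ('v \<Rightarrow> real) \<Rightarrow> real \<Rightarrow> real \<Rightarrow>
    ('v \<Rightarrow> real) \<Rightarrow> ('v set \<Rightarrow> real) \<Rightarrow> ereal" where
  "v_spars_hs V E lv le uv ue A h s Cv Ce =
     (INF D\<in>{D. demand_on V D \<and> A_respecting V A D \<and> v_hlength V E lv le h D}.
        spars_of (v_cutsize V E uv ue Cv Ce) (v_sep V E lv le (h * s) Cv Ce (h * s) D))"

definition v_expanding :: "'v set \<Rightarrow> 'v set set \<Rightarrow> ('v \<Rightarrow> nat) \<Rightarrow> ('v set \<Rightarrow> nat) \<Rightarrow>
    ('v \<Rightarrow> nat) \<Rightarrow> ('v set \<Rightarrow> nat) \<Rightarrow> ('v \<Rightarrow> real) \<Rightarrow> real \<Rightarrow> real \<Rightarrow> real \<Rightarrow> bool" where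
  "v_expanding V E lv le uv ue A h s \<phi> \<longleftrightarrow>
     (\<forall>Cv Ce. v_movcut V E (h * s) Cv Ce \<longrightarrow> v_spars_hs V E lv le uv ue A h s Cv Ce \<ge> ereal \<phi>)"

datatype 'v node = In 'v | Mid 'v | Out 'v

definition ec_V :: "'v set \<Rightarrow> 'v node set" where
  "ec_V V = In ` V \<union> Mid ` V \<union> Out ` V"

definition ec_E :: "'v set \<Rightarrow> 'v set set \<Rightarrow> ('v node \<times> 'v node) set" where
  "ec_E V E = (\<Union>v\<in>V. {(In v, Mid v), (Mid v, Out v), (In v, Out v)})
     \<union> {(Out a, In b) | a b. {a, b} \<in> E}"

fun ec_attr :: "('v \<Rightarrow> nat) \<Rightarrow> ('v set \<Rightarrow> nat) \<Rightarrow> 'v node \<times> 'v node \<Rightarrow> real" where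
  "ec_attr f g (In v, Mid _) = real (f v)"
| "ec_attr f g (Mid v, Out _) = real (f v)"
| "ec_attr f g (In v, Out _) = real (f v)"
| "ec_attr f g (Out a, In b) = real (g {a, b})"
| "ec_attr f g _ = 0"

fun ec_A :: "('v \<Rightarrow> real) \<Rightarrow> 'v node \<Rightarrow> real" where
  "ec_A A (Mid v) = A v"
| "ec_A A _ = 0"

end

theory Submission
  imports Defs
begin

fun ecr :: "('v \<Rightarrow> real) \<Rightarrow> ('v set \<Rightarrow> real) \<Rightarrow> 'v node \<times> 'v node \<Rightarrow> real" where
  "ecr f g (In v, Mid _) = f v"
| "ecr f g (Mid v, Out _) = f v"
| "ecr f g (In v, Out _) = f v"
| "ecr f g (Out a, In b) = g {a, b}"
| "ecr f g _ = 0"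

fun base :: "'v node \<Rightarrow> 'v" where
  "base (In v) = v" | "base (Mid v) = v" | "base (Out v) = v"

lemma dwalk_len_Cons2: "dwalk_len L (a # b # q) = L (a,b) + dwalk_len L (b # q)"
  by (simp add: dwalk_len_def)
lemma dwalk_len_single[simp]: "dwalk_len L [a] = 0"
  by (simp add: dwalk_len_def)
lemma dwalk_Cons2: "dwalk V E (a # b # q) \<longleftrightarrow> a \<in> V \<and> (a,b) \<in> E \<and> dwalk V E (b # q)"
  by (auto simp: dwalk_def)
lemma dwalk_single[simp]: "dwalk V E [a] \<longleftrightarrow> a \<in> V"
  by (auto simp: dwalk_def)
lemma vwalk_len_Cons2: "vwalk_len Lv Le (a # b # p) = Lv a + Le {a,b} + vwalk_len Lv Le (b # p)"
  by (simp add: vwalk_len_def)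
lemma vwalk_len_single[simp]: "vwalk_len Lv Le [a] = Lv a"
  by (simp add: vwalk_len_def)
lemma vwalk_Cons2: "vwalk V E (a # b # q) \<longleftrightarrow> a \<in> V \<and> {a,b} \<in> E \<and> vwalk V E (b # q)"
  by (auto simp: vwalk_def)
lemma vwalk_single[simp]: "vwalk V E [a] \<longleftrightarrow> a \<in> V"
  by (auto simp: vwalk_def)

lemma ecV_simps[simp]: "In x \<in> ec_V V \<longleftrightarrow> x \<in> V" "Mid x \<in> ec_V V \<longleftrightarrow> x \<in> V" "Out x \<in> ec_V V \<longleftrightarrow> x \<in> V"
  by (auto simp: ec_V_def)

lemma ecE_iff: "(a,b) \<in> ec_E V E \<longleftrightarrow>
   (\<exists>x\<in>V. (a,b) = (In x, Mid x) \<or> (a,b) = (Mid x, Out x) \<or> (a,b) = (In x, Out x)) \<or>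
   (\<exists>x y. a = Out x \<and> b = In y \<and> {x,y} \<in> E)"
  by (auto simp: ec_E_def)

lemma lift_walk:
  assumes L1: "\<And>x. x \<in> V \<Longrightarrow> L (In x, Mid x) \<le> Lv x \<and> L (In x, Out x) \<le> Lv x"
      and L2: "\<And>a b. {a,b} \<in> E \<Longrightarrow> L (Out a, In b) \<le> Le {a,b}"
  shows "vwalk V E p \<Longrightarrow> \<exists>q. dwalk (ec_V V) (ec_E V E) q \<and> hd q = In (hd p) \<and> last q = Mid (last p)
            \<and> dwalk_len L q \<le> vwalk_len Lv Le p"
proof (induction p)
  case Nil
  then show ?case by (simp add: vwalk_def)
next
  case (Cons a p)
  show ?case
  proof (cases p)
    case Nil
    then show ?thesis using Cons.prems L1[of a]
      by (intro exI[of _ "[In a, Mid a]"]) (auto simp: dwalk_Cons2 dwalk_len_Cons2 ecE_iff)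
  next
    case (Cons b p')
    with Cons.prems have w: "vwalk V E p" "a \<in> V" "{a,b} \<in> E" by (auto simp: vwalk_Cons2)
    from Cons.IH[OF w(1)] obtain q where q: "dwalk (ec_V V) (ec_E V E) q" "hd q = In (hd p)"
      "last q = Mid (last p)" "dwalk_len L q \<le> vwalk_len Lv Le p" by blast
    have qne: "q \<noteq> []" using q(1) by (simp add: dwalk_def)
    then obtain c q' where qc: "q = c # q'" by (cases q) auto
    have "c = In b" using q(2) qc Cons by simp
    show ?thesis
      apply (intro exI[of _ "In a # Out a # q"])
      using q qc \<open>c = In b\<close> w L1[of a] L2[OF w(3)] Cons
      by (auto simp: dwalk_Cons2 dwalk_len_Cons2 vwalk_len_Cons2 ecE_iff)
  qed
qed

lemma project_walk:
  assumes L1: "\<And>x. x \<in> V \<Longrightarrow> Lv x \<le> L (In x, Mid x) \<and> Lv x \<le> L (In x, Out x) \<and> Lv x \<le> L (Mid x, Out x) \<and> 0 \<le> Lv x"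
      and L2: "\<And>a b. {a,b} \<in> E \<Longrightarrow> Le {a,b} \<le> L (Out a, In b)"
      and Eok: "\<And>a b. {a,b} \<in> E \<Longrightarrow> a \<in> V \<and> b \<in> V"
  shows "dwalk (ec_V V) (ec_E V E) q \<Longrightarrow> last q = Mid v \<Longrightarrow> 2 \<le> length q \<Longrightarrow>
     \<exists>p. vwalk V E p \<and> hd p = base (hd q) \<and> last p = v \<and>
        vwalk_len Lv Le p \<le> dwalk_len L q + (case hd q of Out x \<Rightarrow> Lv x | _ \<Rightarrow> 0)"
proof (induction q)
  case Nil
  then show ?case by simp
next
  case (Cons a q)
  then obtain b q' where qb: "q = b # q'" by (cases q) auto
  have e: "(a,b) \<in> ec_E V E" and wq: "dwalk (ec_V V) (ec_E V E) q"
    using Cons.prems(1) qb by (auto simp: dwalk_Cons2)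
  show ?case
  proof (cases "q' = []")
    case True
    then have "b = Mid v" using Cons.prems(2) qb by simp
    then have "a = In v" "v \<in> V" using e by (auto simp: ecE_iff)
    then show ?thesis using L1[of v] qb True \<open>b = Mid v\<close>
      by (intro exI[of _ "[v]"]) (simp add: dwalk_len_Cons2)
  next
    case False
    then have "2 \<le> length q" using qb by (cases q') auto
    moreover have "last q = Mid v" using Cons.prems(2) qb by simp
    ultimately obtain p where p: "vwalk V E p" "hd p = base (hd q)" "last p = v"
      "vwalk_len Lv Le p \<le> dwalk_len L q + (case hd q of Out x \<Rightarrow> Lv x | _ \<Rightarrow> 0)"
      using Cons.IH wq by blast
    have dl: "dwalk_len L (a # q) = L (a,b) + dwalk_len L q" using qb by (simp add: dwalk_len_Cons2)
    from e consider (g) x where "x \<in> V" "(a,b) = (In x, Mid x) \<or> (a,b) = (Mid x, Out x) \<or> (a,b) = (In x, Out x)"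
      | (o) x y where "a = Out x" "b = In y" "{x,y} \<in> E" unfolding ecE_iff by blast
    then show ?thesis
    proof cases
      case g
      then show ?thesis using p dl qb L1[of x]
        by (intro exI[of _ p]) auto
    next
      case o
      have pne: "p \<noteq> []" using p(1) by (simp add: vwalk_def)
      then obtain c p' where pc: "p = c # p'" by (cases p) auto
      have "c = y" using p(2) pc qb o by simp
      show ?thesis
        apply (intro exI[of _ "x # p"])
        using p pc \<open>c = y\<close> o dl qb L2[OF o(3)] Eok[OF o(3)]
        by (auto simp: vwalk_Cons2 vwalk_len_Cons2)
    qed
  qed
qed

lemma ddist_le_vdist:
  assumes uv: "u \<in> V" "v \<in> V"
      and L1: "\<And>x. x \<in> V \<Longrightarrow> L (In x, Mid x) \<le> Lv x \<and> L (In x, Out x) \<le> Lv x \<and> L (Mid x, Out x) \<le> Lv x"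
      and L2: "\<And>a b. {a,b} \<in> E \<Longrightarrow> L (Out a, In b) \<le> Le {a,b}"
  shows "ddist (ec_V V) (ec_E V E) L (Mid u) (Mid v) \<le> vdist V E Lv Le u v"
proof (cases "u = v")
  case True
  have "ddist (ec_V V) (ec_E V E) L (Mid u) (Mid v) \<le> ereal (dwalk_len L [Mid u])"
    unfolding ddist_def using uv True by (intro INF_lower) auto
  then show ?thesis using True by (simp add: vdist_def zero_ereal_def)
next
  case False
  have "ddist (ec_V V) (ec_E V E) L (Mid u) (Mid v) \<le> ereal (vwalk_len Lv Le p)"
    if p: "vwalk V E p" "hd p = u" "last p = v" for p
  proof -
    obtain b p' where pc: "p = u # b # p'"
      using p False by (cases p; cases "tl p") (auto simp: vwalk_def)
    have w: "vwalk V E (b # p')" "{u,b} \<in> E" using p(1) pc by (auto simp: vwalk_Cons2)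
    obtain q where q: "dwalk (ec_V V) (ec_E V E) q" "hd q = In b" "last q = Mid v"
      "dwalk_len L q \<le> vwalk_len Lv Le (b # p')"
      using lift_walk[of V L Lv E Le, OF _ _ w(1)] L1 L2 p(3) pc by fastforce
    have qne: "q \<noteq> []" using q(1) by (simp add: dwalk_def)
    then obtain c q' where qc: "q = c # q'" by (cases q) auto
    have "ddist (ec_V V) (ec_E V E) L (Mid u) (Mid v) \<le> ereal (dwalk_len L (Mid u # Out u # q))"
      unfolding ddist_def
      apply (rule INF_lower)
      using q qc uv w L1[of u] by (auto simp: dwalk_Cons2 ecE_iff)
    also have "\<dots> \<le> ereal (vwalk_len Lv Le p)"
      using q qc pc L1[OF uv(1)] L2[OF w(2)] by (auto simp: dwalk_len_Cons2 vwalk_len_Cons2)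
    finally show ?thesis .
  qed
  then show ?thesis using False unfolding vdist_def by (auto intro!: INF_greatest)
qed

lemma dwalk_len_nonneg:
  assumes "\<And>e. e \<in> E \<Longrightarrow> 0 \<le> L e" "dwalk V E q"
  shows "0 \<le> dwalk_len L q"
  using assms unfolding dwalk_len_def dwalk_def
  by (intro sum_list_nonneg) auto

lemma vdist_le_ddist:
  assumes uv: "u \<in> V" "v \<in> V"
      and L1: "\<And>x. x \<in> V \<Longrightarrow> Lv x \<le> L (In x, Mid x) \<and> Lv x \<le> L (In x, Out x) \<and> Lv x \<le> L (Mid x, Out x) \<and> 0 \<le> Lv x"
      and L2: "\<And>a b. {a,b} \<in> E \<Longrightarrow> Le {a,b} \<le> L (Out a, In b) \<and> 0 \<le> Le {a,b}"
      and Eok: "\<And>a b. {a,b} \<in> E \<Longrightarrow> a \<in> V \<and> b \<in> V"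
  shows "vdist V E Lv Le u v \<le> ddist (ec_V V) (ec_E V E) L (Mid u) (Mid v)"
proof (cases "u = v")
  case True
  have nn: "0 \<le> L e" if "e \<in> ec_E V E" for e
  proof -
    obtain a b where e: "e = (a,b)" by force
    show ?thesis using that L1 L2 unfolding e ecE_iff by (auto intro: order_trans)
  qed
  show ?thesis using True unfolding vdist_def ddist_def
    by (auto intro!: INF_greatest dwalk_len_nonneg[OF nn])
next
  case False
  have "vdist V E Lv Le u v \<le> ereal (dwalk_len L q)"
    if q: "dwalk (ec_V V) (ec_E V E) q" "hd q = Mid u" "last q = Mid v" for q
  proof -
    have "2 \<le> length q" using q False by (cases q; cases "tl q") (auto simp: dwalk_def)
    then obtain p where p: "vwalk V E p" "hd p = u" "last p = v" "vwalk_len Lv Le p \<le> dwalk_len L q"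
      using project_walk[of V Lv L E Le q v] L1 L2 Eok q by fastforce
    show ?thesis unfolding vdist_def using False p by (auto intro!: INF_lower2[of p])
  qed
  then show ?thesis unfolding ddist_def by (auto intro!: INF_greatest)
qed

lemma zip_snoc: "xs \<noteq> [] \<Longrightarrow> zip (xs @ [x]) (tl (xs @ [x])) = zip xs (tl xs) @ [(last xs, x)]"
  by (induction xs) (auto simp: neq_Nil_conv)

lemma zip_rev_tl: "zip (rev p) (tl (rev p)) = rev (map prod.swap (zip p (tl p)))"
proof (induction p)
  case Nil then show ?case by simp
next
  case (Cons a p)
  show ?case
  proof (cases p)
    case Nil then show ?thesis by simp
  next
    case (Cons b p')
    have "rev p \<noteq> []" using Cons by simp
    have "zip (rev (a#p)) (tl (rev (a#p))) = zip (rev p @ [a]) (tl (rev p @ [a]))" by simp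
    also have "\<dots> = zip (rev p) (tl (rev p)) @ [(last (rev p), a)]" using zip_snoc[OF \<open>rev p \<noteq> []\<close>] .
    also have "\<dots> = rev (map prod.swap (zip p (tl p))) @ [(b, a)]"
      by (simp only: Cons.IH) (simp add: Cons last_rev)
    also have "\<dots> = rev (map prod.swap (zip (a#p) (tl (a#p))))" using Cons by simp
    finally show ?thesis .
  qed
qed

lemma vwalk_rev: "vwalk V E p \<Longrightarrow> vwalk V E (rev p)"
  unfolding vwalk_def zip_rev_tl by (auto simp: insert_commute)

lemma vwalk_len_rev: "vwalk_len Lv Le (rev p) = vwalk_len Lv Le p"
proof -
  have "map (\<lambda>(a,b). Le {a,b}) (rev (map prod.swap (zip p (tl p)))) = rev (map (\<lambda>(a,b). Le {a,b}) (zip p (tl p)))"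
    by (simp add: rev_map insert_commute case_prod_beta)
  then show ?thesis unfolding vwalk_len_def zip_rev_tl by (simp only: sum_list_rev rev_map[symmetric])
qed

lemma vdist_le_sym: "vdist V E Lv Le u v \<le> vdist V E Lv Le v u"
proof (cases "u = v")
  case True then show ?thesis by simp
next
  case False
  show ?thesis unfolding vdist_def using False
    apply (auto intro!: INF_greatest)
    subgoal for p
      by (rule INF_lower2[of "rev p"]) (auto simp: vwalk_rev vwalk_len_rev hd_rev last_rev)
    done
qed

lemma vdist_sym: "vdist V E Lv Le u v = vdist V E Lv Le v u"
  by (intro antisym vdist_le_sym)

lemma ecE_decomp:
  "ec_E V E = ((\<lambda>v. (In v, Mid v)) ` V \<union> (\<lambda>v. (Mid v, Out v)) ` V \<union> (\<lambda>v. (In v, Out v)) ` V)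
      \<union> (\<lambda>(a,b). (Out a, In b)) ` {(a,b). {a,b} \<in> E}"
  unfolding ec_E_def by auto

lemma sum_ecE:
  assumes fin: "finite V" and Eok: "\<And>a b. {a,b} \<in> E \<Longrightarrow> a \<in> V \<and> b \<in> V"
  shows "sum f (ec_E V E) = (\<Sum>v\<in>V. f (In v, Mid v) + f (Mid v, Out v) + f (In v, Out v))
           + (\<Sum>(a,b)\<in>{(a,b). {a,b} \<in> E}. f (Out a, In b))"
proof -
  let ?P = "{(a,b). {a,b} \<in> E}"
  have fP: "finite ?P" by (rule finite_subset[of _ "V \<times> V"]) (use Eok fin in auto)
  have "sum f (ec_E V E) = sum f ((\<lambda>v. (In v, Mid v)) ` V \<union> (\<lambda>v. (Mid v, Out v)) ` V \<union> (\<lambda>v. (In v, Out v)) ` V)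
      + sum f ((\<lambda>(a,b). (Out a, In b)) ` ?P)"
    unfolding ecE_decomp using fin fP by (intro sum.union_disjoint) auto
  also have "sum f ((\<lambda>v. (In v, Mid v)) ` V \<union> (\<lambda>v. (Mid v, Out v)) ` V \<union> (\<lambda>v. (In v, Out v)) ` V)
     = sum f ((\<lambda>v. (In v, Mid v)) ` V \<union> (\<lambda>v. (Mid v, Out v)) ` V) + sum f ((\<lambda>v. (In v, Out v)) ` V)"
    using fin by (intro sum.union_disjoint) (simp, simp, blast)
  also have "sum f ((\<lambda>v. (In v, Mid v)) ` V \<union> (\<lambda>v. (Mid v, Out v)) ` V)
     = sum f ((\<lambda>v. (In v, Mid v)) ` V) + sum f ((\<lambda>v. (Mid v, Out v)) ` V)"
    using fin by (intro sum.union_disjoint) (simp, simp, blast)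
  also have "sum f ((\<lambda>v. (In v, Mid v)) ` V) = (\<Sum>v\<in>V. f (In v, Mid v))"
    by (subst sum.reindex) (auto simp: inj_on_def)
  also have "sum f ((\<lambda>v. (Mid v, Out v)) ` V) = (\<Sum>v\<in>V. f (Mid v, Out v))"
    by (subst sum.reindex) (auto simp: inj_on_def)
  also have "sum f ((\<lambda>v. (In v, Out v)) ` V) = (\<Sum>v\<in>V. f (In v, Out v))"
    by (subst sum.reindex) (auto simp: inj_on_def)
  also have "sum f ((\<lambda>(a,b). (Out a, In b)) ` ?P) = (\<Sum>(a,b)\<in>?P. f (Out a, In b))"
    by (subst sum.reindex) (auto simp: inj_on_def case_prod_beta)
  finally show ?thesis by (simp add: sum.distrib)
qed

lemma sum_P_group:
  assumes fin: "finite V" and Eok: "\<And>a b. {a,b} \<in> E \<Longrightarrow> a \<in> V \<and> b \<in> V" and fE: "finite E"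
  shows "(\<Sum>(a,b)\<in>{(a,b). {a,b} \<in> E}. g a b) = (\<Sum>e\<in>E. \<Sum>(a,b)\<in>{(a,b). {a,b} \<in> E \<and> {a,b} = e}. g a b)"
proof -
  let ?P = "{(a,b). {a,b} \<in> E}"
  have fP: "finite ?P" by (rule finite_subset[of _ "V \<times> V"]) (use Eok fin in auto)
  have sub: "(\<lambda>(a,b). {a,b}) ` ?P \<subseteq> E" by auto
  have "(\<Sum>e\<in>E. sum (\<lambda>(a,b). g a b) {x \<in> ?P. (\<lambda>(a,b). {a,b}) x = e}) = sum (\<lambda>(a,b). g a b) ?P"
    by (rule sum.group[OF fP fE sub])
  moreover have "\<And>e. {x \<in> ?P. (\<lambda>(a,b). {a,b}) x = e} = {(a,b). {a,b} \<in> E \<and> {a,b} = e}" by auto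
  ultimately show ?thesis by simp
qed

lemma fiber_card:
  assumes "e = {x,y}"
  shows "card {(a,b). {a,b} \<in> E \<and> {a,b} = e} \<le> 2"
proof -
  have sub: "{(a,b). {a,b} \<in> E \<and> {a,b} = e} \<subseteq> {(x,y),(y,x)}"
  proof -
    have d: "\<And>a b. {a,b} = {x,y} \<Longrightarrow> (a,b) = (x,y) \<or> (a,b) = (y,x)" unfolding doubleton_eq_iff by blast
    show ?thesis
    proof (rule subsetI)
      fix z assume z: "z \<in> {(a,b). {a,b} \<in> E \<and> {a,b} = e}"
      obtain a b where zab: "z = (a,b)" by force
      have "{a,b} = {x,y}" using z zab assms by simp
      then show "z \<in> {(x,y),(y,x)}" using d[of a b] zab by simp
    qed
  qed
  have "card {(a,b). {a,b} \<in> E \<and> {a,b} = e} \<le> card {(x,y),(y,x)}" by (rule card_mono[OF _ sub]) simp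
  also have "\<dots> \<le> 2"
    by (metis card_2_iff card.empty card_insert_if dual_order.eq_iff finite.emptyI insert_absorb2 le_SucI numeral_2_eq_2)
  finally show ?thesis .
qed

lemma cut_val_nonpos: "H \<le> 0 \<Longrightarrow> cut_val H x \<Longrightarrow> x = 0"
  unfolding cut_val_def
  by (cases "H = 0") (auto simp: divide_nonneg_neg intro: antisym)

lemma cut_val_nonneg: "cut_val H x \<Longrightarrow> 0 \<le> x"
  unfolding cut_val_def by auto

lemma cut_val_mult_nonneg: "cut_val H x \<Longrightarrow> 0 \<le> H * x"
  using cut_val_nonpos[of H x] cut_val_nonneg[of H x] by (cases "H \<le> 0") auto

lemma cut_val_mult_mono: "cut_val H x \<Longrightarrow> cut_val H y \<Longrightarrow> x \<le> y \<Longrightarrow> H * x \<le> H * y"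
  using cut_val_nonpos[of H x] cut_val_nonpos[of H y] by (cases "H \<le> 0") (auto intro: mult_left_mono)

lemma cut_val_max: "cut_val H x \<Longrightarrow> cut_val H y \<Longrightarrow> cut_val H (max x y)"
  by (simp add: max_def)

lemma spars_mono:
  assumes "0 \<le> a" "a \<le> a'" "0 \<le> b'" "b' \<le> b" "ereal \<phi> \<le> spars_of a b"
  shows "ereal \<phi> \<le> spars_of a' b'"
proof (cases "b' = 0")
  case True then show ?thesis by (simp add: spars_of_def)
next
  case False
  then have "b' > 0" "b > 0" using assms by auto
  then have "\<phi> \<le> a / b" using assms(5) by (simp add: spars_of_def)
  also have "a / b \<le> a / b'" using assms \<open>b' > 0\<close> by (intro divide_left_mono) auto
  also have "\<dots> \<le> a' / b'" using assms \<open>b' > 0\<close> by (intro divide_right_mono) auto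
  finally show ?thesis using False by (simp add: spars_of_def)
qed

lemma spars3:
  assumes "a' \<le> 3 * a" "0 \<le> b" "ereal \<phi> \<le> spars_of a' b"
  shows "ereal (\<phi> / 3) \<le> spars_of a b"
proof (cases "b = 0")
  case True then show ?thesis by (simp add: spars_of_def)
next
  case False
  then have "b > 0" using assms by auto
  then have "\<phi> \<le> a' / b" using assms(3) False by (simp add: spars_of_def)
  also have "\<dots> \<le> 3 * a / b" using assms \<open>b > 0\<close> by (intro divide_right_mono) auto
  also have "\<dots> = 3 * (a / b)" by simp
  finally have "\<phi> / 3 \<le> a / b" by linarith
  then show ?thesis using False by (simp add: spars_of_def)
qed

lemma sum_ecV_Mid:
  assumes "finite V" "\<And>x. x \<in> ec_V V \<Longrightarrow> x \<notin> Mid ` V \<Longrightarrow> f x = 0"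
  shows "sum f (ec_V V) = (\<Sum>w\<in>V. f (Mid w))"
proof -
  have "sum f (ec_V V) = sum f (Mid ` V)"
    using assms by (intro sum.mono_neutral_right) (auto simp: ec_V_def)
  also have "\<dots> = (\<Sum>w\<in>V. f (Mid w))" by (subst sum.reindex) (auto simp: inj_on_def)
  finally show ?thesis .
qed

lemma dsep_reduce:
  assumes fin: "finite V"
      and D: "\<And>a b. D a b \<noteq> 0 \<Longrightarrow> \<exists>u v. a = Mid u \<and> b = Mid v \<and> u \<in> V \<and> v \<in> V"
  shows "(\<Sum>(a,b)\<in>{(a,b)\<in>ec_V V \<times> ec_V V. Q a b}. D a b)
       = (\<Sum>(u,v)\<in>{(u,v)\<in>V \<times> V. Q (Mid u) (Mid v)}. D (Mid u) (Mid v))"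
proof -
  let ?T = "{(u,v)\<in>V \<times> V. Q (Mid u) (Mid v)}"
  have fe: "finite (ec_V V)" using fin by (simp add: ec_V_def)
  have "(\<Sum>(a,b)\<in>{(a,b)\<in>ec_V V \<times> ec_V V. Q a b}. D a b) = (\<Sum>(a,b)\<in>(\<lambda>(u,v). (Mid u, Mid v)) ` ?T. D a b)"
  proof -
    have z: "D a b = 0" if ab: "(a,b) \<in> {(a,b)\<in>ec_V V \<times> ec_V V. Q a b}" "(a,b) \<notin> (\<lambda>(u,v). (Mid u, Mid v)) ` ?T" for a b
    proof (rule ccontr)
      assume "D a b \<noteq> 0"
      then obtain u v where "a = Mid u" "b = Mid v" "u \<in> V" "v \<in> V" using D by blast
      then show False using ab by auto
    qed
    show ?thesis
      apply (rule sum.mono_neutral_right)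
      subgoal by (rule finite_subset[OF _ finite_cartesian_product[OF fe fe]]) auto
      subgoal by auto
      subgoal using z by auto
      done
  qed
  also have "\<dots> = (\<Sum>(u,v)\<in>?T. D (Mid u) (Mid v))"
    by (subst sum.reindex) (auto simp: inj_on_def case_prod_beta)
  finally show ?thesis .
qed

lemma sum_swap_sym:
  assumes "\<And>u v. (u,v) \<in> Q \<longleftrightarrow> (v,u) \<in> Q"
  shows "(\<Sum>(u,v)\<in>Q. f v u) = (\<Sum>(u,v)\<in>Q. f u v)"
proof -
  have Q: "prod.swap ` Q = Q"
  proof
    show "prod.swap ` Q \<subseteq> Q" using assms by auto
    show "Q \<subseteq> prod.swap ` Q"
    proof
      fix x assume "x \<in> Q"
      then have "prod.swap x \<in> Q" using assms by (cases x) auto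
      then show "x \<in> prod.swap ` Q" by (metis image_eqI swap_swap)
    qed
  qed
  have "(\<Sum>(u,v)\<in>Q. f u v) = (\<Sum>(u,v)\<in>prod.swap ` Q. f u v)" using Q by simp
  also have "\<dots> = (\<Sum>(u,v)\<in>Q. f v u)" by (subst sum.reindex) (auto simp: case_prod_beta)
  finally show ?thesis by simp
qed

lemma Dsupp:
  assumes dem: "demand_on (ec_V V) D" and ar: "A_respecting (ec_V V) (ec_A A) D"
      and fin: "finite V" and nz: "D a b \<noteq> 0"
  shows "\<exists>u v. a = Mid u \<and> b = Mid v \<and> u \<in> V \<and> v \<in> V"
proof -
  have ab: "a \<in> ec_V V" "b \<in> ec_V V" using dem nz by (auto simp: demand_on_def)
  have fe: "finite (ec_V V)" using fin by (simp add: ec_V_def)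
  have nn: "\<And>u v. 0 \<le> D u v" using dem by (simp add: demand_on_def)
  have pos: "0 < D a b" using nn[of a b] nz by linarith
  have "D a b \<le> (\<Sum>w\<in>ec_V V. D a w)" by (rule member_le_sum) (use nn ab fe in auto)
  also have "\<dots> \<le> ec_A A a" using ar ab unfolding A_respecting_def by fastforce
  finally have r: "D a b \<le> ec_A A a" .
  have "D a b \<le> (\<Sum>w\<in>ec_V V. D w b)" by (rule member_le_sum[where f = "\<lambda>w. D w b"]) (use nn ab fe in auto)
  also have "\<dots> \<le> ec_A A b" using ar ab unfolding A_respecting_def by fastforce
  finally have c: "D a b \<le> ec_A A b" .
  obtain u where u: "a = Mid u" using r pos by (cases a) auto
  obtain v where v: "b = Mid v" using c pos by (cases b) auto
  show ?thesis using u v ab by auto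
qed

lemma vc_facts:
  assumes G: "vc_graph V E lv le uv ue A"
  shows "finite V" "\<And>a b. {a,b} \<in> E \<Longrightarrow> a \<in> V \<and> b \<in> V" "finite E"
    "\<And>e. e \<in> E \<Longrightarrow> \<exists>x y. e = {x,y} \<and> {x,y} \<in> E"
proof -
  show fin: "finite V" using G by (simp add: vc_graph_def)
  show Eok: "\<And>a b. {a,b} \<in> E \<Longrightarrow> a \<in> V \<and> b \<in> V"
  proof -
    fix a b assume "{a,b} \<in> E"
    then obtain x y where "{a,b} = {x,y}" "x \<in> V" "y \<in> V" using G unfolding vc_graph_def by blast
    then show "a \<in> V \<and> b \<in> V" by (metis insertCI insertE singletonD)
  qed
  show "finite E"
  proof (rule finite_subset[of _ "Pow V"])
    show "E \<subseteq> Pow V"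
    proof
      fix e assume "e \<in> E"
      then obtain x y where "e = {x,y}" "x \<in> V" "y \<in> V" using G unfolding vc_graph_def by blast
      then show "e \<in> Pow V" by auto
    qed
  qed (use fin in simp)
  show "\<And>e. e \<in> E \<Longrightarrow> \<exists>x y. e = {x,y} \<and> {x,y} \<in> E"
  proof -
    fix e assume "e \<in> E"
    then obtain x y where "e = {x,y}" using G unfolding vc_graph_def by blast
    then show "\<exists>x y. e = {x,y} \<and> {x,y} \<in> E" using \<open>e \<in> E\<close> by blast
  qed
qed

lemma part1:
  assumes G: "vc_graph V E lv le uv ue A"
      and vexp: "v_expanding V E lv le uv ue A h s \<phi>"
  shows "d_expanding (ec_V V) (ec_E V E) (ec_attr lv le) (ec_attr uv ue) (ec_A A) h s \<phi>"
  unfolding d_expanding_def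
proof (intro allI impI)
  note vf = vc_facts[OF G]
  have fin: "finite V" and Eok: "\<And>a b. {a,b} \<in> E \<Longrightarrow> a \<in> V \<and> b \<in> V" and fE: "finite E"
    and Eform: "\<And>e. e \<in> E \<Longrightarrow> \<exists>x y. e = {x,y} \<and> {x,y} \<in> E" using vf by blast+
  have fe: "finite (ec_V V)" using fin by (simp add: ec_V_def)
  fix C assume mc: "d_movcut (ec_E V E) (h * s) C"
  define H where "H = h * s"
  define fib where "fib e = {(a,b). {a,b} \<in> E \<and> {a,b} = e}" for e
  define Cv where "Cv x = max (max (C (In x, Mid x)) (C (Mid x, Out x))) (C (In x, Out x))" for x
  define Ce where "Ce e = Max ((\<lambda>(a,b). C (Out a, In b)) ` fib e)" for e
  have cvC: "\<And>e. e \<in> ec_E V E \<Longrightarrow> cut_val H (C e)" using mc by (simp add: d_movcut_def H_def)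
  have fibfin: "finite (fib e)" for e
    by (rule finite_subset[of _ "V \<times> V"]) (use Eok fin in \<open>auto simp: fib_def\<close>)
  have fibne: "fib e \<noteq> {}" if eE: "e \<in> E" for e
  proof -
    obtain x y where "e = {x,y}" "{x,y} \<in> E" using Eform[OF eE] by blast
    then have "(x,y) \<in> fib e" by (simp add: fib_def)
    then show ?thesis by blast
  qed
  have Ce_mem: "\<exists>a b. (a,b) \<in> fib e \<and> Ce e = C (Out a, In b)" if "e \<in> E" for e
  proof -
    have "Ce e \<in> (\<lambda>(a,b). C (Out a, In b)) ` fib e"
      unfolding Ce_def using fibfin fibne[OF that] by (intro Max_in) auto
    then show ?thesis by auto
  qed
  have Ce_ge: "C (Out a, In b) \<le> Ce {a,b}" if "{a,b} \<in> E" for a b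
  proof -
    have "(a,b) \<in> fib {a,b}" using that by (simp add: fib_def)
    then show ?thesis unfolding Ce_def using fibfin by (intro Max_ge) force+
  qed
  have cvCe: "cut_val H (Ce e)" if eE: "e \<in> E" for e
  proof -
    obtain a b where "(a,b) \<in> fib e" "Ce e = C (Out a, In b)" using Ce_mem[OF eE] by blast
    then show ?thesis using cvC[of "(Out a, In b)"] by (auto simp: fib_def ecE_iff)
  qed
  have cvCv: "cut_val H (Cv x)" if "x \<in> V" for x
    unfolding Cv_def using that cvC by (intro cut_val_max) (auto simp: ecE_iff)
  have mcv: "v_movcut V E H Cv Ce" using cvCe cvCv by (simp add: v_movcut_def)
  show "ereal \<phi> \<le> d_spars_hs (ec_V V) (ec_E V E) (ec_attr lv le) (ec_attr uv ue) (ec_A A) h s C"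
    unfolding d_spars_hs_def le_INF_iff
  proof (intro ballI)
    fix D assume "D \<in> {D. demand_on (ec_V V) D \<and> A_respecting (ec_V V) (ec_A A) D \<and>
        d_hlength (ec_V V) (ec_E V E) (ec_attr lv le) h D \<and> symmetric_demand D}"
    then have dem: "demand_on (ec_V V) D" and ar: "A_respecting (ec_V V) (ec_A A) D"
      and hl: "d_hlength (ec_V V) (ec_E V E) (ec_attr lv le) h D" by auto
    have nn: "\<And>u v. 0 \<le> D u v" using dem by (simp add: demand_on_def)
    have DS: "\<And>a b. D a b \<noteq> 0 \<Longrightarrow> \<exists>u v. a = Mid u \<and> b = Mid v \<and> u \<in> V \<and> v \<in> V"
      using Dsupp[OF dem ar fin] by blast
    define Dv where "Dv u v = D (Mid u) (Mid v)" for u v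
    have demv: "demand_on V Dv"
      unfolding demand_on_def Dv_def using nn DS by fastforce
    have arv: "A_respecting V A Dv"
      unfolding A_respecting_def
    proof (intro ballI)
      fix v assume v: "v \<in> V"
      have r: "(\<Sum>w\<in>V. Dv v w) = (\<Sum>x\<in>ec_V V. D (Mid v) x)"
        unfolding Dv_def using DS by (intro sum_ecV_Mid[symmetric] fin) blast
      have c: "(\<Sum>w\<in>V. Dv w v) = (\<Sum>x\<in>ec_V V. D x (Mid v))"
        unfolding Dv_def using DS by (intro sum_ecV_Mid[symmetric, where f = "\<lambda>x. D x (Mid v)"] fin) blast
      have "max (\<Sum>x\<in>ec_V V. D (Mid v) x) (\<Sum>x\<in>ec_V V. D x (Mid v)) \<le> ec_A A (Mid v)"
        using bspec[OF ar[unfolded A_respecting_def], of "Mid v"] v by simp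
      then show "max (\<Sum>w\<in>V. Dv v w) (\<Sum>w\<in>V. Dv w v) \<le> A v" using r c by simp
    qed
    have base_le: "vdist V E (\<lambda>x. real (lv x)) (\<lambda>e. real (le e)) u v
        \<le> ddist (ec_V V) (ec_E V E) (ec_attr lv le) (Mid u) (Mid v)" if "u \<in> V" "v \<in> V" for u v
      by (rule vdist_le_ddist[OF that _ _ Eok]) auto
    have hlv: "v_hlength V E lv le h Dv"
      unfolding v_hlength_def
    proof (intro allI impI)
      fix u v assume pos: "0 < Dv u v"
      then obtain u' v' where "Mid u = Mid u'" "Mid v = Mid v'" "u' \<in> V" "v' \<in> V"
        using DS[of "Mid u" "Mid v"] unfolding Dv_def by force
      then have uv: "u \<in> V" "v \<in> V" by auto
      have "ddist (ec_V V) (ec_E V E) (ec_attr lv le) (Mid u) (Mid v) \<le> ereal h"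
        using hl pos unfolding d_hlength_def Dv_def by blast
      then show "vdist V E (\<lambda>x. real (lv x)) (\<lambda>e. real (le e)) u v \<le> ereal h"
        using base_le[OF uv] by (rule order_trans[rotated])
    qed
    have sp: "ereal \<phi> \<le> spars_of (v_cutsize V E uv ue Cv Ce) (v_sep V E lv le H Cv Ce H Dv)"
      using vexp mcv demv arv hlv unfolding v_expanding_def v_spars_hs_def le_INF_iff H_def by blast
    show "ereal \<phi> \<le> spars_of (d_cutsize (ec_E V E) (ec_attr uv ue) C)
              (d_sep (ec_V V) (ec_E V E) (ec_attr lv le) (h * s) C (h * s) D)"
      unfolding H_def[symmetric]
    proof (rule spars_mono[OF _ _ _ _ sp])
      show "0 \<le> v_cutsize V E uv ue Cv Ce"
        unfolding v_cutsize_def using cvCv cvCe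
        by (intro add_nonneg_nonneg sum_nonneg mult_nonneg_nonneg) (auto intro: cut_val_nonneg)
      show "0 \<le> d_sep (ec_V V) (ec_E V E) (ec_attr lv le) H C H D"
        unfolding d_sep_def using nn by (intro sum_nonneg) auto
      show "v_cutsize V E uv ue Cv Ce \<le> d_cutsize (ec_E V E) (ec_attr uv ue) C"
      proof -
        have Cnn: "0 \<le> C e" if "e \<in> ec_E V E" for e using cvC[OF that] by (rule cut_val_nonneg)
        have s1: "(\<Sum>v\<in>V. real (uv v) * Cv v) \<le> (\<Sum>v\<in>V. ec_attr uv ue (In v, Mid v) * C (In v, Mid v)
             + ec_attr uv ue (Mid v, Out v) * C (Mid v, Out v) + ec_attr uv ue (In v, Out v) * C (In v, Out v))"
        proof (rule sum_mono)
          fix v assume v: "v \<in> V"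
          have n1: "0 \<le> C (In v, Mid v)" "0 \<le> C (Mid v, Out v)" "0 \<le> C (In v, Out v)"
            using Cnn v by (auto simp: ecE_iff)
          have "Cv v \<le> C (In v, Mid v) + C (Mid v, Out v) + C (In v, Out v)"
            unfolding Cv_def using n1 by (simp add: max_def)
          then have "real (uv v) * Cv v \<le> real (uv v) * (C (In v, Mid v) + C (Mid v, Out v) + C (In v, Out v))"
            by (rule mult_left_mono) simp
          then show "real (uv v) * Cv v \<le> ec_attr uv ue (In v, Mid v) * C (In v, Mid v)
             + ec_attr uv ue (Mid v, Out v) * C (Mid v, Out v) + ec_attr uv ue (In v, Out v) * C (In v, Out v)"
            by (simp add: algebra_simps)
        qed
        have s2: "(\<Sum>e\<in>E. real (ue e) * Ce e)
            \<le> (\<Sum>(a,b)\<in>{(a,b). {a,b} \<in> E}. ec_attr uv ue (Out a, In b) * C (Out a, In b))"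
        proof -
          have eq: "(\<Sum>(a,b)\<in>{(a,b). {a,b} \<in> E}. ec_attr uv ue (Out a, In b) * C (Out a, In b))
             = (\<Sum>e\<in>E. \<Sum>(a,b)\<in>fib e. ec_attr uv ue (Out a, In b) * C (Out a, In b))"
            unfolding fib_def by (rule sum_P_group[OF fin Eok fE])
          have le: "real (ue e) * Ce e \<le> (\<Sum>(a,b)\<in>fib e. ec_attr uv ue (Out a, In b) * C (Out a, In b))"
            if eE: "e \<in> E" for e
          proof -
            obtain a b where ab: "(a,b) \<in> fib e" "Ce e = C (Out a, In b)" using Ce_mem[OF eE] by blast
            have abE: "{a,b} \<in> E" "{a,b} = e" using ab(1) by (auto simp: fib_def)
            have "real (ue e) * Ce e = (\<lambda>(a,b). ec_attr uv ue (Out a, In b) * C (Out a, In b)) (a,b)"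
              using ab abE by simp
            also have "\<dots> \<le> (\<Sum>(a,b)\<in>fib e. ec_attr uv ue (Out a, In b) * C (Out a, In b))"
            proof (rule member_le_sum[OF ab(1) _ fibfin])
              fix x assume "x \<in> fib e - {(a,b)}"
              then obtain c d where x: "x = (c,d)" "{c,d} \<in> E" by (auto simp: fib_def)
              have "(Out c, In d) \<in> ec_E V E" using x by (auto simp: ecE_iff)
              then show "0 \<le> (\<lambda>(a,b). ec_attr uv ue (Out a, In b) * C (Out a, In b)) x"
                using x Cnn by simp
            qed
            finally show ?thesis .
          qed
          show ?thesis unfolding eq by (rule sum_mono[OF le])
        qed
        have "d_cutsize (ec_E V E) (ec_attr uv ue) C = (\<Sum>v\<in>V. ec_attr uv ue (In v, Mid v) * C (In v, Mid v)
             + ec_attr uv ue (Mid v, Out v) * C (Mid v, Out v) + ec_attr uv ue (In v, Out v) * C (In v, Out v))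
           + (\<Sum>(a,b)\<in>{(a,b). {a,b} \<in> E}. ec_attr uv ue (Out a, In b) * C (Out a, In b))"
          unfolding d_cutsize_def by (rule sum_ecE[OF fin Eok])
        then show ?thesis unfolding v_cutsize_def using s1 s2 by linarith
      qed
      show "d_sep (ec_V V) (ec_E V E) (ec_attr lv le) H C H D \<le> v_sep V E lv le H Cv Ce H Dv"
      proof -
        define Ld where "Ld e = ec_attr lv le e + H * C e" for e
        define Lv where "Lv x = real (lv x) + H * Cv x" for x
        define Le where "Le e = real (le e) + H * Ce e" for e
        have L1: "Ld (In x, Mid x) \<le> Lv x \<and> Ld (In x, Out x) \<le> Lv x \<and> Ld (Mid x, Out x) \<le> Lv x"
          if x: "x \<in> V" for x
        proof -
          have c: "cut_val H (C (In x, Mid x))" "cut_val H (C (In x, Out x))" "cut_val H (C (Mid x, Out x))"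
            using cvC x by (auto simp: ecE_iff)
          have "H * C (In x, Mid x) \<le> H * Cv x" "H * C (In x, Out x) \<le> H * Cv x" "H * C (Mid x, Out x) \<le> H * Cv x"
            by (rule cut_val_mult_mono[OF _ cvCv[OF x]], fact c, simp add: Cv_def)+
          then show ?thesis unfolding Ld_def Lv_def by simp
        qed
        have L2: "Ld (Out a, In b) \<le> Le {a,b}" if ab: "{a,b} \<in> E" for a b
        proof -
          have "cut_val H (C (Out a, In b))" using cvC ab by (auto simp: ecE_iff)
          then have "H * C (Out a, In b) \<le> H * Ce {a,b}" by (rule cut_val_mult_mono[OF _ cvCe[OF ab] Ce_ge[OF ab]])
          then show ?thesis unfolding Ld_def Le_def by simp
        qed
        have dl: "ddist (ec_V V) (ec_E V E) Ld (Mid u) (Mid v) \<le> vdist V E Lv Le u v"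
          if "u \<in> V" "v \<in> V" for u v
          by (rule ddist_le_vdist[OF that L1 L2])
        have Ld_eq: "(\<lambda>e. ec_attr lv le e + H * C e) = Ld" by (simp add: Ld_def fun_eq_iff)
        have "d_sep (ec_V V) (ec_E V E) (ec_attr lv le) H C H D
            = (\<Sum>(u,v)\<in>{(u,v)\<in>V \<times> V. ereal H < ddist (ec_V V) (ec_E V E) Ld (Mid u) (Mid v)}. D (Mid u) (Mid v))"
          unfolding d_sep_def Ld_eq by (rule dsep_reduce[OF fin DS])
        also have "\<dots> \<le> (\<Sum>(u,v)\<in>{(u,v)\<in>V \<times> V. ereal H < vdist V E Lv Le u v}. D (Mid u) (Mid v))"
        proof (rule sum_mono2)
          show "finite {(u,v)\<in>V \<times> V. ereal H < vdist V E Lv Le u v}"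
            by (rule finite_subset[OF _ finite_cartesian_product[OF fin fin]]) auto
          show "{(u,v)\<in>V \<times> V. ereal H < ddist (ec_V V) (ec_E V E) Ld (Mid u) (Mid v)}
              \<subseteq> {(u,v)\<in>V \<times> V. ereal H < vdist V E Lv Le u v}"
            using dl by (auto intro: less_le_trans)
          show "\<And>b. b \<in> {(u,v)\<in>V \<times> V. ereal H < vdist V E Lv Le u v} -
              {(u,v)\<in>V \<times> V. ereal H < ddist (ec_V V) (ec_E V E) Ld (Mid u) (Mid v)} \<Longrightarrow>
              0 \<le> (case b of (u,v) \<Rightarrow> D (Mid u) (Mid v))"
            using nn by auto
        qed
        also have "\<dots> = v_sep V E lv le H Cv Ce H Dv"
          unfolding v_sep_def Dv_def Lv_def Le_def by simp
        finally show ?thesis .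
      qed
    qed
  qed
qed

lemma part2:
  assumes G: "vc_graph V E lv le uv ue A"
      and dexp: "d_expanding (ec_V V) (ec_E V E) (ec_attr lv le) (ec_attr uv ue) (ec_A A) h s \<phi>"
  shows "v_expanding V E lv le uv ue A h s (\<phi> / 3)"
  unfolding v_expanding_def
proof (intro allI impI)
  note vf = vc_facts[OF G]
  have fin: "finite V" and Eok: "\<And>a b. {a,b} \<in> E \<Longrightarrow> a \<in> V \<and> b \<in> V" and fE: "finite E"
    and Eform: "\<And>e. e \<in> E \<Longrightarrow> \<exists>x y. e = {x,y} \<and> {x,y} \<in> E" using vf by blast+
  have fe: "finite (ec_V V)" using fin by (simp add: ec_V_def)
  fix Cv Ce assume mc: "v_movcut V E (h * s) Cv Ce"
  define H where "H = h * s"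
  define C where "C = ecr Cv Ce"
  have cvv: "\<And>x. x \<in> V \<Longrightarrow> cut_val H (Cv x)" and cve: "\<And>e. e \<in> E \<Longrightarrow> cut_val H (Ce e)"
    using mc by (auto simp: v_movcut_def H_def)
  have dmc: "d_movcut (ec_E V E) H C"
    unfolding d_movcut_def
  proof
    fix e assume e: "e \<in> ec_E V E"
    obtain a b where eab: "e = (a,b)" by force
    show "cut_val H (C e)" using e cvv cve unfolding eab ecE_iff C_def by auto
  qed
  show "ereal (\<phi> / 3) \<le> v_spars_hs V E lv le uv ue A h s Cv Ce"
    unfolding v_spars_hs_def le_INF_iff
  proof (intro ballI)
    fix D assume "D \<in> {D. demand_on V D \<and> A_respecting V A D \<and> v_hlength V E lv le h D}"
    then have dem: "demand_on V D" and ar: "A_respecting V A D" and hl: "v_hlength V E lv le h D" by auto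
    have nn: "\<And>u v. 0 \<le> D u v" using dem by (simp add: demand_on_def)
    define Dd where "Dd a b = (case a of Mid u \<Rightarrow> (case b of Mid v \<Rightarrow> (D u v + D v u) / 2 | _ \<Rightarrow> 0) | _ \<Rightarrow> 0)" for a b
    have Dd_Mid[simp]: "Dd (Mid u) (Mid v) = (D u v + D v u) / 2" for u v by (simp add: Dd_def)
    have Dd_nonMid: "Dd a b = 0" if "\<forall>u v. a \<noteq> Mid u \<or> b \<noteq> Mid v" for a b
      using that unfolding Dd_def by (cases a; cases b) auto
    have Dd_sym: "Dd a b = Dd b a" for a b unfolding Dd_def by (cases a; cases b) auto
    have Ddnn: "0 \<le> Dd a b" for a b unfolding Dd_def using nn by (cases a; cases b) auto
    have DS: "\<exists>u v. a = Mid u \<and> b = Mid v \<and> u \<in> V \<and> v \<in> V" if nz: "Dd a b \<noteq> 0" for a b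
    proof -
      obtain u v where uv: "a = Mid u" "b = Mid v" using nz Dd_nonMid by blast
      then have "D u v \<noteq> 0 \<or> D v u \<noteq> 0" using nz by auto
      then have "u \<in> V \<and> v \<in> V" using dem unfolding demand_on_def by blast
      then show ?thesis using uv by blast
    qed
    have demd: "demand_on (ec_V V) Dd"
      unfolding demand_on_def using Ddnn DS by fastforce
    have ard: "A_respecting (ec_V V) (ec_A A) Dd"
      unfolding A_respecting_def
    proof (intro ballI)
      fix a assume a: "a \<in> ec_V V"
      have col: "(\<Sum>w\<in>ec_V V. Dd w a) = (\<Sum>w\<in>ec_V V. Dd a w)" using Dd_sym by simp
      have "(\<Sum>w\<in>ec_V V. Dd a w) \<le> ec_A A a"
      proof (cases "\<exists>v. a = Mid v")
        case True
        then obtain v where av: "a = Mid v" by blast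
        then have v: "v \<in> V" using a by simp
        have "(\<Sum>w\<in>ec_V V. Dd a w) = (\<Sum>w\<in>V. Dd (Mid v) (Mid w))"
          unfolding av by (rule sum_ecV_Mid[OF fin]) (auto intro: Dd_nonMid)
        also have "\<dots> = (\<Sum>w\<in>V. (D v w + D w v) / 2)" by simp
        also have "\<dots> = (\<Sum>w\<in>V. D v w + D w v) / 2" by (rule sum_divide_distrib[symmetric])
        also have "\<dots> = ((\<Sum>w\<in>V. D v w) + (\<Sum>w\<in>V. D w v)) / 2" by (simp only: sum.distrib)
        also have "\<dots> \<le> A v" using bspec[OF ar[unfolded A_respecting_def] v] by simp
        finally show ?thesis using av by simp
      next
        case False
        then have "\<And>w. Dd a w = 0" by (intro Dd_nonMid) auto
        moreover have "ec_A A a = 0" using False by (cases a) auto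
        ultimately show ?thesis by simp
      qed
      then show "max (\<Sum>w\<in>ec_V V. Dd a w) (\<Sum>w\<in>ec_V V. Dd w a) \<le> ec_A A a" using col by simp
    qed
    have symd: "symmetric_demand Dd" unfolding symmetric_demand_def using Dd_sym by blast
    have base_le: "ddist (ec_V V) (ec_E V E) (ec_attr lv le) (Mid u) (Mid v)
        \<le> vdist V E (\<lambda>x. real (lv x)) (\<lambda>e. real (le e)) u v" if "u \<in> V" "v \<in> V" for u v
      by (rule ddist_le_vdist[OF that]) auto
    have hld: "d_hlength (ec_V V) (ec_E V E) (ec_attr lv le) h Dd"
      unfolding d_hlength_def
    proof (intro allI impI)
      fix a b assume pos: "0 < Dd a b"
      have "Dd a b \<noteq> 0" using pos by simp
      then obtain u v where uv: "a = Mid u" "b = Mid v" "u \<in> V" "v \<in> V" using DS by blast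
      have hl': "vdist V E (\<lambda>x. real (lv x)) (\<lambda>e. real (le e)) u' v' \<le> ereal h" if "0 < D u' v'" for u' v'
        using hl that unfolding v_hlength_def by blast
      have "0 < D u v \<or> 0 < D v u" using pos nn[of u v] nn[of v u] uv by auto
      then have vd: "vdist V E (\<lambda>x. real (lv x)) (\<lambda>e. real (le e)) u v \<le> ereal h"
      proof
        assume "0 < D u v" then show ?thesis by (rule hl')
      next
        assume "0 < D v u"
        then have "vdist V E (\<lambda>x. real (lv x)) (\<lambda>e. real (le e)) v u \<le> ereal h" by (rule hl')
        then show ?thesis by (simp only: vdist_sym)
      qed
      have "ddist (ec_V V) (ec_E V E) (ec_attr lv le) (Mid u) (Mid v) \<le> ereal h"
        using base_le[OF uv(3,4)] vd by (rule order_trans)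
      then show "ddist (ec_V V) (ec_E V E) (ec_attr lv le) a b \<le> ereal h" using uv by simp
    qed
    have sp: "ereal \<phi> \<le> spars_of (d_cutsize (ec_E V E) (ec_attr uv ue) C)
                 (d_sep (ec_V V) (ec_E V E) (ec_attr lv le) H C H Dd)"
      using dexp dmc demd ard hld symd unfolding d_expanding_def d_spars_hs_def le_INF_iff H_def by blast
    show "ereal (\<phi> / 3) \<le> spars_of (v_cutsize V E uv ue Cv Ce) (v_sep V E lv le (h * s) Cv Ce (h * s) D)"
      unfolding H_def[symmetric]
    proof (rule spars3)
      show "d_cutsize (ec_E V E) (ec_attr uv ue) C \<le> 3 * v_cutsize V E uv ue Cv Ce"
      proof -
        let ?P = "{(a,b). {a,b} \<in> E}"
        have Cenn: "0 \<le> Ce e" if "e \<in> E" for e using cve[OF that] by (rule cut_val_nonneg)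
        have Cvnn: "0 \<le> Cv x" if "x \<in> V" for x using cvv[OF that] by (rule cut_val_nonneg)
        have eqc: "d_cutsize (ec_E V E) (ec_attr uv ue) C = (\<Sum>v\<in>V. ec_attr uv ue (In v, Mid v) * C (In v, Mid v)
             + ec_attr uv ue (Mid v, Out v) * C (Mid v, Out v) + ec_attr uv ue (In v, Out v) * C (In v, Out v))
           + (\<Sum>(a,b)\<in>?P. ec_attr uv ue (Out a, In b) * C (Out a, In b))"
          unfolding d_cutsize_def by (rule sum_ecE[OF fin Eok])
        have p1: "(\<Sum>v\<in>V. ec_attr uv ue (In v, Mid v) * C (In v, Mid v)
             + ec_attr uv ue (Mid v, Out v) * C (Mid v, Out v) + ec_attr uv ue (In v, Out v) * C (In v, Out v))
             = 3 * (\<Sum>v\<in>V. real (uv v) * Cv v)"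
          unfolding sum_distrib_left by (rule sum.cong) (simp_all add: C_def)
        have p2: "(\<Sum>(a,b)\<in>?P. ec_attr uv ue (Out a, In b) * C (Out a, In b)) \<le> 2 * (\<Sum>e\<in>E. real (ue e) * Ce e)"
        proof -
          have "(\<Sum>(a,b)\<in>?P. ec_attr uv ue (Out a, In b) * C (Out a, In b))
              = (\<Sum>e\<in>E. \<Sum>(a,b)\<in>{(a,b). {a,b} \<in> E \<and> {a,b} = e}. ec_attr uv ue (Out a, In b) * C (Out a, In b))"
            by (rule sum_P_group[OF fin Eok fE])
          also have "\<dots> = (\<Sum>e\<in>E. real (card {(a,b). {a,b} \<in> E \<and> {a,b} = e}) * (real (ue e) * Ce e))"
          proof (rule sum.cong[OF refl])
            fix e assume "e \<in> E"
            have "(\<Sum>(a,b)\<in>{(a,b). {a,b} \<in> E \<and> {a,b} = e}. ec_attr uv ue (Out a, In b) * C (Out a, In b))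
                = (\<Sum>(a,b)\<in>{(a,b). {a,b} \<in> E \<and> {a,b} = e}. real (ue e) * Ce e)"
            proof (rule sum.cong[OF refl])
              fix x assume x: "x \<in> {(a,b). {a,b} \<in> E \<and> {a,b} = e}"
              obtain a b where xab: "x = (a,b)" by force
              have "{a,b} = e" using x xab by simp
              then show "(case x of (a,b) \<Rightarrow> ec_attr uv ue (Out a, In b) * C (Out a, In b))
                  = (case x of (a,b) \<Rightarrow> real (ue e) * Ce e)" using xab by (simp add: C_def)
            qed
            then show "(\<Sum>(a,b)\<in>{(a,b). {a,b} \<in> E \<and> {a,b} = e}. ec_attr uv ue (Out a, In b) * C (Out a, In b))
                = real (card {(a,b). {a,b} \<in> E \<and> {a,b} = e}) * (real (ue e) * Ce e)" by simp
          qed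
          also have "\<dots> \<le> (\<Sum>e\<in>E. 2 * (real (ue e) * Ce e))"
          proof (rule sum_mono)
            fix e assume eE: "e \<in> E"
            obtain x y where "e = {x,y}" using Eform[OF eE] by blast
            then have "card {(a,b). {a,b} \<in> E \<and> {a,b} = e} \<le> 2" by (rule fiber_card)
            then have "real (card {(a,b). {a,b} \<in> E \<and> {a,b} = e}) \<le> 2" by simp
            then show "real (card {(a,b). {a,b} \<in> E \<and> {a,b} = e}) * (real (ue e) * Ce e) \<le> 2 * (real (ue e) * Ce e)"
              by (rule mult_right_mono) (simp add: Cenn[OF eE])
          qed
          also have "\<dots> = 2 * (\<Sum>e\<in>E. real (ue e) * Ce e)" by (simp add: sum_distrib_left)
          finally show ?thesis .
        qed
        have nnE: "0 \<le> (\<Sum>e\<in>E. real (ue e) * Ce e)" using Cenn by (intro sum_nonneg) simp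
        show ?thesis unfolding eqc v_cutsize_def distrib_left using p1 p2 nnE by linarith
      qed
      show "0 \<le> v_sep V E lv le H Cv Ce H D"
        unfolding v_sep_def using nn by (intro sum_nonneg) auto
      have "d_sep (ec_V V) (ec_E V E) (ec_attr lv le) H C H Dd = v_sep V E lv le H Cv Ce H D"
      proof -
        define Ld where "Ld e = ec_attr lv le e + H * C e" for e
        define Lv where "Lv x = real (lv x) + H * Cv x" for x
        define Le where "Le e = real (le e) + H * Ce e" for e
        have L1: "Ld (In x, Mid x) \<le> Lv x \<and> Ld (In x, Out x) \<le> Lv x \<and> Ld (Mid x, Out x) \<le> Lv x" for x
          by (simp add: Ld_def Lv_def C_def)
        have L2: "Ld (Out a, In b) \<le> Le {a,b}" for a b
          by (simp add: Ld_def Le_def C_def)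
        have L1': "Lv x \<le> Ld (In x, Mid x) \<and> Lv x \<le> Ld (In x, Out x) \<and> Lv x \<le> Ld (Mid x, Out x) \<and> 0 \<le> Lv x"
          if "x \<in> V" for x
          using cut_val_mult_nonneg[OF cvv[OF that]] by (simp add: Ld_def Lv_def C_def)
        have L2': "Le {a,b} \<le> Ld (Out a, In b) \<and> 0 \<le> Le {a,b}" if "{a,b} \<in> E" for a b
          using cut_val_mult_nonneg[OF cve[OF that]] by (simp add: Ld_def Le_def C_def)
        have eqd: "ddist (ec_V V) (ec_E V E) Ld (Mid u) (Mid v) = vdist V E Lv Le u v"
          if "u \<in> V" "v \<in> V" for u v
          using ddist_le_vdist[OF that L1 L2] vdist_le_ddist[OF that L1' L2' Eok] by (rule antisym)
        have Ld_eq: "(\<lambda>e. ec_attr lv le e + H * C e) = Ld" by (simp add: Ld_def fun_eq_iff)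
        let ?Q = "{(u,v)\<in>V \<times> V. ereal H < vdist V E Lv Le u v}"
        have "d_sep (ec_V V) (ec_E V E) (ec_attr lv le) H C H Dd
            = (\<Sum>(u,v)\<in>{(u,v)\<in>V \<times> V. ereal H < ddist (ec_V V) (ec_E V E) Ld (Mid u) (Mid v)}. Dd (Mid u) (Mid v))"
          unfolding d_sep_def Ld_eq by (rule dsep_reduce[OF fin DS])
        also have "{(u,v)\<in>V \<times> V. ereal H < ddist (ec_V V) (ec_E V E) Ld (Mid u) (Mid v)} = ?Q"
          using eqd by auto
        also have "(\<Sum>(u,v)\<in>?Q. Dd (Mid u) (Mid v)) = (\<Sum>x\<in>?Q. (D (fst x) (snd x) + D (snd x) (fst x)) / 2)"
          by (simp add: case_prod_beta)
        also have "\<dots> = ((\<Sum>x\<in>?Q. D (fst x) (snd x)) + (\<Sum>x\<in>?Q. D (snd x) (fst x))) / 2"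
          by (simp only: sum_divide_distrib[symmetric] sum.distrib)
        also have "(\<Sum>x\<in>?Q. D (snd x) (fst x)) = (\<Sum>x\<in>?Q. D (fst x) (snd x))"
        proof -
          have Qsym: "\<And>u v. (u,v) \<in> ?Q \<longleftrightarrow> (v,u) \<in> ?Q" using vdist_sym[of V E Lv Le] by auto
          show ?thesis using sum_swap_sym[OF Qsym, of D] by (simp add: case_prod_beta)
        qed
        also have "((\<Sum>x\<in>?Q. D (fst x) (snd x)) + (\<Sum>x\<in>?Q. D (fst x) (snd x))) / 2 = (\<Sum>(u,v)\<in>?Q. D u v)"
          by (simp add: case_prod_beta)
        also have "\<dots> = v_sep V E lv le H Cv Ce H D"
          unfolding v_sep_def Lv_def Le_def by simp
        finally show ?thesis .
      qed
      then show "ereal \<phi> \<le> spars_of (d_cutsize (ec_E V E) (ec_attr uv ue) C) (v_sep V E lv le H Cv Ce H D)"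
        using sp by simp
    qed
  qed
qed


theorem theorem4p5:
  fixes V :: "'v set" and E :: "'v set set"
    and lv :: "'v \<Rightarrow> nat" and le :: "'v set \<Rightarrow> nat"
    and uv :: "'v \<Rightarrow> nat" and ue :: "'v set \<Rightarrow> nat"
    and A :: "'v \<Rightarrow> real" and h s \<phi> :: real
  assumes "vc_graph V E lv le uv ue A"
  shows "(v_expanding V E lv le uv ue A h s \<phi> \<longrightarrow>
            d_expanding (ec_V V) (ec_E V E) (ec_attr lv le) (ec_attr uv ue) (ec_A A) h s \<phi>)
       \<and> (d_expanding (ec_V V) (ec_E V E) (ec_attr lv le) (ec_attr uv ue) (ec_A A) h s \<phi> \<longrightarrow>
            v_expanding V E lv le uv ue A h s (\<phi> / 3))"
  using part1[OF assms] part2[OF assms] by blast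

end
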